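(* For $n\ge 1$, let $\overline{G}_n$ denote the collection of all polyphenylene chains with $n$ hexagons, one for each sequence of attachment choices (ortho/meta/para) at steps $3,\dots,n$ (so $|\overline{G}_n|=3^{\max(n-2,0)}$, counted with multiplicity). Then \[ \mathrm{STN}_{avr}(\overline{G}_n):=\frac{1}{|\overline{G}_n|}\sum_{G\in\overline{G}_n}\mathrm{STN}(G)=\frac{3969}{1444}\Big(\frac{41}{3}\Big)^n+\frac{45}{38}n-\frac{3969}{1444}. \]
   Context: For a graph $G$, $\mathrm{STN}(G)$ is the number of nonempty subtrees of $G$ (subgraphs that are trees, single vertices included). A polyphenylene chain with $n$ hexagons consists of pairwise vertex-disjoint hexagons (6-cycles) $H_1,\dots,H_n$ where for each $i<n$ one vertex of $H_i$ is joined to one vertex of $H_{i+1}$ by a single cut edge, with no other edges. It is built by stepwise addition of terminal hexagons: for $n\le 2$ it is unique, and at each step $i=3,\dots,n$ the new hexagon $H_i$ is attached by a cut edge at a vertex of $H_{i-1}$ at distance $1$ (ortho), $2$ (meta) or $3$ (para) from the vertex of $H_{i-1}$ attached to $H_{i-2}$. *)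

theory Defs
  imports Complex_Main
begin

text \<open>A (finite simple) graph is given by a vertex set V and a set E of edges,
each edge being a 2-element set of vertices.\<close>

definition adj_rel :: "'a set set \<Rightarrow> ('a \<times> 'a) set" where
  "adj_rel E = {(a, b). {a, b} \<in> E}"

definition sg_connected :: "'a set \<Rightarrow> 'a set set \<Rightarrow> bool" where
  "sg_connected V E \<longleftrightarrow> (\<forall>u\<in>V. \<forall>v\<in>V. (u, v) \<in> (adj_rel E)\<^sup>*)"

definition has_cycle :: "'a set set \<Rightarrow> bool" where
  "has_cycle E \<longleftrightarrow> (\<exists>cs. length cs \<ge> 3 \<and> distinct cs \<and>
      (\<forall>i < length cs. {cs ! i, cs ! ((i + 1) mod length cs)} \<in> E))"

definition is_subtree :: "'a set \<Rightarrow> 'a set set \<Rightarrow> 'a set \<Rightarrow> 'a set set \<Rightarrow> bool" where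
  "is_subtree V E V' E' \<longleftrightarrow> V' \<noteq> {} \<and> V' \<subseteq> V \<and> E' \<subseteq> E \<and> (\<forall>e\<in>E'. e \<subseteq> V') \<and>
      sg_connected V' E' \<and> \<not> has_cycle E'"

definition STN :: "'a set \<Rightarrow> 'a set set \<Rightarrow> nat" where
  "STN V E = card {(V', E'). is_subtree V E V' E'}"

text \<open>Hexagon i (0-based, i < n) has vertices (i,0),...,(i,5) forming a 6-cycle.
For i \<ge> 1 the vertex (i,0) is the one attached to hexagon i-1.
The list ds (length n-2, entries in {1,2,3}) encodes the attachment choices:
hexagon i+1 (for i \<ge> 1) is attached at vertex (i, ds!(i-1)) of hexagon i, which is at
distance ds!(i-1) (1 = ortho, 2 = meta, 3 = para) from (i,0).
Hexagon 1 is attached to vertex (0,0) of hexagon 0 (by symmetry, no choice).\<close>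

definition pp_verts :: "nat \<Rightarrow> (nat \<times> nat) set" where
  "pp_verts n = {0..<n} \<times> {0..<6}"

definition hex_edges :: "nat \<Rightarrow> (nat \<times> nat) set set" where
  "hex_edges n = {{(i, j), (i, (j + 1) mod 6)} | i j. i < n \<and> j < 6}"

definition out_vertex :: "nat list \<Rightarrow> nat \<Rightarrow> nat" where
  "out_vertex ds i = (if i = 0 then 0 else ds ! (i - 1))"

definition cut_edges :: "nat \<Rightarrow> nat list \<Rightarrow> (nat \<times> nat) set set" where
  "cut_edges n ds = {{(i, out_vertex ds i), (Suc i, 0)} | i. Suc i < n}"

definition pp_edges :: "nat \<Rightarrow> nat list \<Rightarrow> (nat \<times> nat) set set" where
  "pp_edges n ds = hex_edges n \<union> cut_edges n ds"

definition pp_choices :: "nat \<Rightarrow> nat list set" where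
  "pp_choices n = {ds. length ds = n - 2 \<and> set ds \<subseteq> {1, 2, 3}}"

definition STN_avr :: "nat \<Rightarrow> real" where
  "STN_avr n = (\<Sum>ds\<in>pp_choices n. real (STN (pp_verts n) (pp_edges n ds)))
                / real (card (pp_choices n))"

end

theory Submission
  imports Defs
begin


lemma adj_iff[simp]: "(x,y) \<in> adj_rel E \<longleftrightarrow> {x,y} \<in> E"
  by (simp add: adj_rel_def)

lemma adj_sym: "(x,y) \<in> (adj_rel E)\<^sup>* \<Longrightarrow> (y,x) \<in> (adj_rel E)\<^sup>*"
proof (induction rule: rtrancl_induct)
  case base then show ?case by simp
next
  case (step y z)
  have "(z,y) \<in> adj_rel E" using step(2) by (simp add: insert_commute)
  then show ?case using step(3) by (meson converse_rtrancl_into_rtrancl)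
qed

lemma adj_mono: "(x,y) \<in> (adj_rel E)\<^sup>* \<Longrightarrow> E \<subseteq> F \<Longrightarrow> (x,y) \<in> (adj_rel F)\<^sup>*"
proof (induction rule: rtrancl_induct)
  case base then show ?case by simp
next
  case (step y z)
  then show ?case by (meson adj_iff rtrancl.rtrancl_into_rtrancl subsetD)
qed

lemma has_cycle_mono: "has_cycle E \<Longrightarrow> E \<subseteq> F \<Longrightarrow> has_cycle F"
  unfolding has_cycle_def by blast

lemma mod_shift_ne:
  assumes "a < (L::nat)" "c < L" "c > 0" shows "(a + c) mod L \<noteq> a"
proof (cases "a + c < L")
  case True then show ?thesis using assms by simp
next
  case False
  have "a + c - L < L" using assms by simp
  then have "(a+c-L) mod L = a+c-L" by simp
  moreover have "(a+c) mod L = (a+c-L) mod L" using False by (simp add: le_mod_geq)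
  ultimately show ?thesis using assms False by simp
qed

lemma two_changes:
  fixes f :: "nat \<Rightarrow> bool"
  assumes "i < L" "f i \<noteq> f ((i+1) mod L)"
  shows "\<exists>j<L. j \<noteq> i \<and> f j \<noteq> f ((j+1) mod L)"
proof (rule ccontr)
  assume H: "\<not> ?thesis"
  have L0: "L > 0" using assms by simp
  have "k < L \<Longrightarrow> f ((i+1+k) mod L) = f ((i+1) mod L)" for k
  proof (induction k)
    case 0 then show ?case by simp
  next
    case (Suc k)
    define j where "j = (i+1+k) mod L"
    have jL: "j < L" using L0 j_def by simp
    have "j \<noteq> i"
    proof
      assume "j = i"
      then have "(i + (Suc k)) mod L = i" using j_def by simp
      then show False using mod_shift_ne[of i L "Suc k"] assms(1) Suc.prems by simp
    qed
    then have "f j = f ((j+1) mod L)" using H jL by blast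
    moreover have "(j+1) mod L = (i+1+Suc k) mod L" unfolding j_def by (simp add: mod_Suc_eq)
    moreover have "f j = f ((i+1) mod L)" unfolding j_def using Suc.IH Suc.prems by (metis Suc_lessD)
    ultimately show ?case by metis
  qed
  from this[of "L - 1"] have "f ((i+1+(L-1)) mod L) = f ((i+1) mod L)" using L0 by simp
  moreover have "(i+1+(L-1)) mod L = i" using L0 assms(1) by simp
  ultimately show False using assms(2) by metis
qed

lemma no_change_const:
  fixes f :: "nat \<Rightarrow> bool"
  assumes "\<forall>j<L. f j = f ((j+1) mod L)" "i < L"
  shows "f i = f 0"
  using assms(2)
proof (induction i)
  case 0 then show ?case by simp
next
  case (Suc i)
  then have "f i = f ((i+1) mod L)" using assms(1) by (metis Suc_lessD)
  moreover have "(i+1) mod L = Suc i" using Suc.prems by simp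
  moreover have "f i = f 0" using Suc by (metis Suc_lessD)
  ultimately show ?case by metis
qed

lemma mod_plus2_ne:
  assumes "i < (L::nat)" "L \<ge> 3" shows "((i+1) mod L + 1) mod L \<noteq> i"
proof -
  have "((i+1) mod L + 1) mod L = (i+2) mod L" by (simp add: mod_Suc_eq)
  then show ?thesis using mod_shift_ne[of i L 2] assms by simp
qed

lemma bridge_acyclic:
  assumes D: "V1 \<inter> V2 = {}" and E1: "\<forall>e\<in>E1. e \<subseteq> V1" and E2: "\<forall>e\<in>E2. e \<subseteq> V2"
    and a: "a \<in> V1" and b: "b \<in> V2"
    and C: "has_cycle (E1 \<union> E2 \<union> {{a,b}})"
  shows "has_cycle E1 \<or> has_cycle E2"
proof -
  obtain cs where L3: "length cs \<ge> 3" and dist: "distinct cs" and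
    ed: "\<forall>i < length cs. {cs ! i, cs ! ((i + 1) mod length cs)} \<in> E1 \<union> E2 \<union> {{a,b}}"
    using C unfolding has_cycle_def by blast
  define L where "L = length cs"
  have L3': "L \<ge> 3" using L3 L_def by simp
  define f where "f i = (cs ! i \<in> V1)" for i
  have chg: "{cs ! i, cs ! ((i + 1) mod L)} = {a,b}" if "i < L" "f i \<noteq> f ((i+1) mod L)" for i
  proof -
    have e: "{cs ! i, cs ! ((i + 1) mod L)} \<in> E1 \<union> E2 \<union> {{a,b}}" using ed that L_def by auto
    have "{cs ! i, cs ! ((i + 1) mod L)} \<notin> E1" using E1 that(2) f_def by blast
    moreover have "{cs ! i, cs ! ((i + 1) mod L)} \<notin> E2" using E2 D that(2) f_def by blast
    ultimately show ?thesis using e by blast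
  qed
  have nochg: "\<forall>j<L. f j = f ((j+1) mod L)"
  proof (rule ccontr)
    assume "\<not> ?thesis"
    then obtain i where i: "i < L" "f i \<noteq> f ((i+1) mod L)" by blast
    then obtain j where j: "j < L" "j \<noteq> i" "f j \<noteq> f ((j+1) mod L)" using two_changes by blast
    have ci: "{cs ! i, cs ! ((i + 1) mod L)} = {a,b}" using chg i by blast
    have cj: "{cs ! j, cs ! ((j + 1) mod L)} = {a,b}" using chg j by blast
    have Lp: "L > 0" using L3' by linarith
    have i1: "(i+1) mod L < L" "(j+1) mod L < L" using Lp by auto
    have neq: "cs ! i \<noteq> cs ! j" using dist i j L_def by (simp add: nth_eq_iff_index_eq)
    from ci cj have "{cs ! i, cs ! ((i + 1) mod L)} = {cs ! j, cs ! ((j + 1) mod L)}" by simp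
    then have "cs ! i = cs ! ((j + 1) mod L) \<and> cs ! j = cs ! ((i + 1) mod L)"
      using neq unfolding doubleton_eq_iff by metis
    then have "i = (j+1) mod L" "j = (i+1) mod L"
      using nth_eq_iff_index_eq[OF dist] i(1) j(1) i1 unfolding L_def by metis+
    then show False using mod_plus2_ne[of i L] i(1) L3' by simp
  qed
  have const: "\<forall>i<L. f i = f 0" using no_change_const[OF nochg] by blast
  show ?thesis
  proof (cases "f 0")
    case True
    have "\<forall>i<L. {cs ! i, cs ! ((i + 1) mod L)} \<in> E1"
    proof (intro allI impI)
      fix i assume i: "i < L"
      have Lp: "L > 0" using L3' by linarith
      have m: "(i+1) mod L < L" using Lp by simp
      have "f i" "f ((i+1) mod L)" using const True i m by metis+
      then have v: "cs ! i \<in> V1" "cs ! ((i+1) mod L) \<in> V1" unfolding f_def by auto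
      have e: "{cs ! i, cs ! ((i + 1) mod L)} \<in> E1 \<union> E2 \<union> {{a,b}}" using ed i unfolding L_def by blast
      have "{cs ! i, cs ! ((i + 1) mod L)} \<notin> E2" using E2 D v by blast
      moreover have "{cs ! i, cs ! ((i + 1) mod L)} \<noteq> {a,b}"
      proof
        assume "{cs ! i, cs ! ((i + 1) mod L)} = {a,b}"
        then have "b \<in> {cs ! i, cs ! ((i + 1) mod L)}" by simp
        then show False using v b D by blast
      qed
      ultimately show "{cs ! i, cs ! ((i + 1) mod L)} \<in> E1" using e by blast
    qed
    then have "has_cycle E1" unfolding has_cycle_def L_def using L3 dist by blast
    then show ?thesis by simp
  next
    case False
    have "\<forall>i<L. {cs ! i, cs ! ((i + 1) mod L)} \<in> E2"
    proof (intro allI impI)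
      fix i assume i: "i < L"
      have Lp: "L > 0" using L3' by linarith
      have m: "(i+1) mod L < L" using Lp by simp
      have "\<not> f i" "\<not> f ((i+1) mod L)" using const False i m by metis+
      then have v: "cs ! i \<notin> V1" "cs ! ((i+1) mod L) \<notin> V1" unfolding f_def by auto
      have e: "{cs ! i, cs ! ((i + 1) mod L)} \<in> E1 \<union> E2 \<union> {{a,b}}" using ed i unfolding L_def by blast
      have "{cs ! i, cs ! ((i + 1) mod L)} \<notin> E1" using E1 v by blast
      moreover have "{cs ! i, cs ! ((i + 1) mod L)} \<noteq> {a,b}"
      proof
        assume "{cs ! i, cs ! ((i + 1) mod L)} = {a,b}"
        then have "a \<in> {cs ! i, cs ! ((i + 1) mod L)}" by simp
        then show False using v a by blast
      qed
      ultimately show "{cs ! i, cs ! ((i + 1) mod L)} \<in> E2" using e by blast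
    qed
    then have "has_cycle E2" unfolding has_cycle_def L_def using L3 dist by blast
    then show ?thesis by simp
  qed
qed



lemma conn_nobridge:
  assumes D: "V1 \<inter> V2 = {}" and E1: "\<forall>e\<in>E1. e \<subseteq> V1" and E2: "\<forall>e\<in>E2. e \<subseteq> V2"
    and P: "(u,v) \<in> (adj_rel (E1 \<union> E2))\<^sup>*" and u: "u \<in> V1"
  shows "v \<in> V1 \<and> (u,v) \<in> (adj_rel E1)\<^sup>*"
  using P
proof (induction rule: rtrancl_induct)
  case base then show ?case using u by simp
next
  case (step w z)
  have e: "{w,z} \<in> E1 \<union> E2" using step(2) by simp
  have w: "w \<in> V1" using step(3) by blast
  have "{w,z} \<notin> E2" using E2 D w by blast
  then have e1: "{w,z} \<in> E1" using e by blast
  then have "z \<in> V1" using E1 by blast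
  moreover have "(u,z) \<in> (adj_rel E1)\<^sup>*" using step(3) e1
    by (meson adj_iff rtrancl.rtrancl_into_rtrancl)
  ultimately show ?case by blast
qed

lemma conn_bridge:
  assumes D: "V1 \<inter> V2 = {}" and E1: "\<forall>e\<in>E1. e \<subseteq> V1" and E2: "\<forall>e\<in>E2. e \<subseteq> V2"
    and a: "a \<in> V1" and b: "b \<in> V2"
    and P: "(u,v) \<in> (adj_rel (E1 \<union> E2 \<union> {{a,b}}))\<^sup>*" and u: "u \<in> V1"
  shows "(v \<in> V1 \<longrightarrow> (u,v) \<in> (adj_rel E1)\<^sup>*) \<and>
         (v \<notin> V1 \<longrightarrow> (u,a) \<in> (adj_rel E1)\<^sup>* \<and> (b,v) \<in> (adj_rel E2)\<^sup>*)"
  using P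
proof (induction rule: rtrancl_induct)
  case base then show ?case using u by simp
next
  case (step w z)
  have e: "{w,z} \<in> E1 \<union> E2 \<union> {{a,b}}" using step(2) by simp
  show ?case
  proof (cases "w \<in> V1")
    case True
    have IH: "(u,w) \<in> (adj_rel E1)\<^sup>*" using step(3) True by blast
    have "{w,z} \<notin> E2" using E2 D True by blast
    then have "{w,z} \<in> E1 \<or> {w,z} = {a,b}" using e by blast
    then show ?thesis
    proof
      assume e1: "{w,z} \<in> E1"
      then have "z \<in> V1" using E1 by blast
      moreover have "(u,z) \<in> (adj_rel E1)\<^sup>*" using IH e1
        by (meson adj_iff rtrancl.rtrancl_into_rtrancl)
      ultimately show ?thesis by blast
    next
      assume ab: "{w,z} = {a,b}"
      have "w \<noteq> b" using True b D by blast
      then have "w = a \<and> z = b" using ab unfolding doubleton_eq_iff by blast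
      then show ?thesis using IH b D by blast
    qed
  next
    case False
    have IH: "(u,a) \<in> (adj_rel E1)\<^sup>*" "(b,w) \<in> (adj_rel E2)\<^sup>*" using step(3) False by blast+
    have "{w,z} \<notin> E1" using E1 False by blast
    then have "{w,z} \<in> E2 \<or> {w,z} = {a,b}" using e by blast
    then show ?thesis
    proof
      assume e2: "{w,z} \<in> E2"
      then have "z \<in> V2" using E2 by blast
      then have "z \<notin> V1" using D by blast
      moreover have "(b,z) \<in> (adj_rel E2)\<^sup>*" using IH(2) e2
        by (meson adj_iff rtrancl.rtrancl_into_rtrancl)
      ultimately show ?thesis using IH(1) by blast
    next
      assume ab: "{w,z} = {a,b}"
      have "w \<noteq> a" using False a by blast
      then have "w = b \<and> z = a" using ab unfolding doubleton_eq_iff by blast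
      then show ?thesis using IH a by blast
    qed
  qed
qed

lemma subtree_restrict:
  "is_subtree V E V' E' \<Longrightarrow> V' \<subseteq> U \<Longrightarrow> E' \<subseteq> F \<Longrightarrow> is_subtree U F V' E'"
  unfolding is_subtree_def by blast

lemma nb_side:
  assumes D: "V1 \<inter> V2 = {}" and E1: "\<forall>e\<in>E1. e \<subseteq> V1" and E2: "\<forall>e\<in>E2. e \<subseteq> V2"
    and ne: "{} \<notin> E2"
    and T: "is_subtree U F V' E'" and EE: "E' \<subseteq> E1 \<union> E2" and u: "u \<in> V'" "u \<in> V1"
  shows "is_subtree V1 E1 V' E'"
proof -
  have sub: "\<forall>e\<in>E'. e \<subseteq> V'" "V' \<noteq> {}"
    and con: "sg_connected V' E'" and ac: "\<not> has_cycle E'"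
    using T unfolding is_subtree_def by auto
  have Eeq: "E' = (E' \<inter> E1) \<union> (E' \<inter> E2)" using EE by blast
  have E1': "\<forall>e\<in>E' \<inter> E1. e \<subseteq> V1" using E1 by blast
  have E2': "\<forall>e\<in>E' \<inter> E2. e \<subseteq> V2" using E2 by blast
  have "\<forall>v\<in>V'. v \<in> V1"
  proof
    fix v assume "v \<in> V'"
    then have "(u,v) \<in> (adj_rel E')\<^sup>*" using con u unfolding sg_connected_def by blast
    then have "(u,v) \<in> (adj_rel ((E' \<inter> E1) \<union> (E' \<inter> E2)))\<^sup>*" using Eeq by simp
    from conn_nobridge[OF D E1' E2' this u(2)] show "v \<in> V1" by blast
  qed
  then have VV: "V' \<subseteq> V1" by blast
  have EE1: "E' \<subseteq> E1"
  proof
    fix e assume e: "e \<in> E'"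
    show "e \<in> E1"
    proof (rule ccontr)
      assume "e \<notin> E1"
      then have "e \<in> E2" using e EE by blast
      then have "e \<subseteq> V2" "e \<noteq> {}" using E2 ne by auto
      moreover have "e \<subseteq> V1" using VV sub(1) e by blast
      ultimately show False using D by blast
    qed
  qed
  show ?thesis unfolding is_subtree_def using VV EE1 sub con ac by blast
qed

locale bridge =
  fixes V1 V2 :: "'a set" and E1 E2 :: "'a set set" and a b :: 'a
  assumes D: "V1 \<inter> V2 = {}" and E1: "\<forall>e\<in>E1. e \<subseteq> V1" and E2: "\<forall>e\<in>E2. e \<subseteq> V2"
    and a: "a \<in> V1" and b: "b \<in> V2" and ne1: "{} \<notin> E1" and ne2: "{} \<notin> E2"
begin

lemma fwd:
  assumes T: "is_subtree (V1 \<union> V2) (E1 \<union> E2 \<union> {{a,b}}) V' E'" and ab: "{a,b} \<in> E'"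
  shows "is_subtree V1 E1 (V' \<inter> V1) (E' \<inter> E1)" "is_subtree V2 E2 (V' \<inter> V2) (E' \<inter> E2)"
    "a \<in> V'" "b \<in> V'"
proof -
  have sub: "V' \<subseteq> V1 \<union> V2" "E' \<subseteq> E1 \<union> E2 \<union> {{a,b}}" "\<forall>e\<in>E'. e \<subseteq> V'"
    and con: "sg_connected V' E'" and ac: "\<not> has_cycle E'"
    using T unfolding is_subtree_def by auto
  show av: "a \<in> V'" and bv: "b \<in> V'" using sub(3) ab by auto
  have Eeq: "E' = (E' \<inter> E1) \<union> (E' \<inter> E2) \<union> {{a,b}}" using sub(2) ab by blast
  have E1': "\<forall>e\<in>E' \<inter> E1. e \<subseteq> V' \<inter> V1" using sub(3) E1 by blast
  have E2': "\<forall>e\<in>E' \<inter> E2. e \<subseteq> V' \<inter> V2" using sub(3) E2 by blast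
  have D': "(V' \<inter> V1) \<inter> (V' \<inter> V2) = {}" using D by blast
  have c1: "sg_connected (V' \<inter> V1) (E' \<inter> E1)"
    unfolding sg_connected_def
  proof (intro ballI)
    fix u v assume uv: "u \<in> V' \<inter> V1" "v \<in> V' \<inter> V1"
    have "(u,v) \<in> (adj_rel E')\<^sup>*" using con uv unfolding sg_connected_def by blast
    then have "(u,v) \<in> (adj_rel ((E' \<inter> E1) \<union> (E' \<inter> E2) \<union> {{a,b}}))\<^sup>*" using Eeq by simp
    from conn_bridge[OF D' E1' E2' _ _ this] show "(u,v) \<in> (adj_rel (E' \<inter> E1))\<^sup>*"
      using uv av bv a b by blast
  qed
  have c2: "sg_connected (V' \<inter> V2) (E' \<inter> E2)"
    unfolding sg_connected_def
  proof (intro ballI)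
    fix u v assume uv: "u \<in> V' \<inter> V2" "v \<in> V' \<inter> V2"
    have "(u,v) \<in> (adj_rel E')\<^sup>*" using con uv unfolding sg_connected_def by blast
    then have "(u,v) \<in> (adj_rel ((E' \<inter> E2) \<union> (E' \<inter> E1) \<union> {{b,a}}))\<^sup>*"
      using Eeq by (simp add: insert_commute Un_commute Un_left_commute)
    from conn_bridge[OF _ E2' E1' _ _ this] show "(u,v) \<in> (adj_rel (E' \<inter> E2))\<^sup>*"
      using uv av bv a b D' by blast
  qed
  have "\<not> has_cycle (E' \<inter> E1)" "\<not> has_cycle (E' \<inter> E2)"
    using ac has_cycle_mono by blast+
  then show "is_subtree V1 E1 (V' \<inter> V1) (E' \<inter> E1)" "is_subtree V2 E2 (V' \<inter> V2) (E' \<inter> E2)"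
    unfolding is_subtree_def using c1 c2 E1' E2' av bv a b by blast+
qed

lemma nobridge:
  assumes T: "is_subtree (V1 \<union> V2) (E1 \<union> E2 \<union> {{a,b}}) V' E'" and ab: "{a,b} \<notin> E'"
  shows "is_subtree V1 E1 V' E' \<or> is_subtree V2 E2 V' E'"
proof -
  have sub: "V' \<subseteq> V1 \<union> V2" "E' \<subseteq> E1 \<union> E2" "V' \<noteq> {}"
    using T ab unfolding is_subtree_def by auto
  obtain u where u: "u \<in> V'" using sub(3) by blast
  show ?thesis
  proof (cases "u \<in> V1")
    case True
    then show ?thesis using nb_side[OF D E1 E2 ne2 T sub(2) u] by blast
  next
    case False
    then have "u \<in> V2" using u sub(1) by blast
    moreover have "V2 \<inter> V1 = {}" using D by blast
    moreover have "E' \<subseteq> E2 \<union> E1" using sub(2) by blast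
    ultimately show ?thesis using nb_side[OF _ E2 E1 ne1 T _ u] by blast
  qed
qed

lemma join:
  assumes T1: "is_subtree V1 E1 V1' E1'" and T2: "is_subtree V2 E2 V2' E2'"
    and av: "a \<in> V1'" and bv: "b \<in> V2'"
  shows "is_subtree (V1 \<union> V2) (E1 \<union> E2 \<union> {{a,b}}) (V1' \<union> V2') (E1' \<union> E2' \<union> {{a,b}})"
proof -
  have s1: "V1' \<subseteq> V1" "E1' \<subseteq> E1" "\<forall>e\<in>E1'. e \<subseteq> V1'" "sg_connected V1' E1'" "\<not> has_cycle E1'"
    using T1 unfolding is_subtree_def by auto
  have s2: "V2' \<subseteq> V2" "E2' \<subseteq> E2" "\<forall>e\<in>E2'. e \<subseteq> V2'" "sg_connected V2' E2'" "\<not> has_cycle E2'"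
    using T2 unfolding is_subtree_def by auto
  let ?E = "E1' \<union> E2' \<union> {{a,b}}"
  have r1: "(u,v) \<in> (adj_rel ?E)\<^sup>*" if "u \<in> V1'" "v \<in> V1'" for u v
    using s1(4) that adj_mono[of u v E1' ?E] unfolding sg_connected_def by blast
  have r2: "(u,v) \<in> (adj_rel ?E)\<^sup>*" if "u \<in> V2'" "v \<in> V2'" for u v
    using s2(4) that adj_mono[of u v E2' ?E] unfolding sg_connected_def by blast
  have ab1: "(a,b) \<in> (adj_rel ?E)\<^sup>*" by (intro r_into_rtrancl) simp
  have ab2: "(b,a) \<in> (adj_rel ?E)\<^sup>*" using adj_sym[OF ab1] .
  have con: "sg_connected (V1' \<union> V2') ?E"
    unfolding sg_connected_def
  proof (intro ballI)
    fix u v assume u: "u \<in> V1' \<union> V2'" and v: "v \<in> V1' \<union> V2'"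
    show "(u,v) \<in> (adj_rel ?E)\<^sup>*"
    proof (cases "u \<in> V1'")
      case True
      show ?thesis
      proof (cases "v \<in> V1'")
        case True then show ?thesis using r1 \<open>u \<in> V1'\<close> by blast
      next
        case False then have "v \<in> V2'" using v by blast
        then show ?thesis using r1[OF \<open>u \<in> V1'\<close> av] ab1 r2[OF bv] by (meson rtrancl_trans)
      qed
    next
      case False then have u2: "u \<in> V2'" using u by blast
      show ?thesis
      proof (cases "v \<in> V1'")
        case True
        then show ?thesis using r2[OF u2 bv] ab2 r1[OF av] by (meson rtrancl_trans)
      next
        case False then have "v \<in> V2'" using v by blast
        then show ?thesis using r2 u2 by blast
      qed
    qed
  qed
  have ac: "\<not> has_cycle ?E"
  proof
    assume "has_cycle ?E"
    moreover have "V1' \<inter> V2' = {}" using D s1(1) s2(1) by blast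
    ultimately have "has_cycle E1' \<or> has_cycle E2'" using bridge_acyclic[OF _ s1(3) s2(3) av bv] by blast
    then show False using s1(5) s2(5) by blast
  qed
  show ?thesis unfolding is_subtree_def using s1 s2 av bv a b con ac by blast
qed

end



definition subtrees :: "'a set \<Rightarrow> 'a set set \<Rightarrow> ('a set \<times> 'a set set) set" where
  "subtrees V E = {(V',E'). is_subtree V E V' E'}"

definition cnt :: "'a set \<Rightarrow> 'a set set \<Rightarrow> 'a set \<Rightarrow> nat" where
  "cnt V E W = card {T \<in> subtrees V E. W \<subseteq> fst T}"

lemma st_basic: "is_subtree V E V' E' \<Longrightarrow> V' \<noteq> {} \<and> V' \<subseteq> V \<and> E' \<subseteq> E \<and> (\<forall>e\<in>E'. e \<subseteq> V')"
  unfolding is_subtree_def by blast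

lemma mem_subtrees: "T \<in> subtrees V E \<longleftrightarrow> is_subtree V E (fst T) (snd T)"
  unfolding subtrees_def by (cases T) simp

lemma STN_cnt: "STN V E = cnt V E {}"
  unfolding STN_def cnt_def subtrees_def by simp

lemma finite_subtrees: "finite V \<Longrightarrow> finite E \<Longrightarrow> finite (subtrees V E)"
proof -
  assume f: "finite V" "finite E"
  have "subtrees V E \<subseteq> Pow V \<times> Pow E"
  proof
    fix T assume "T \<in> subtrees V E"
    then have "fst T \<subseteq> V" "snd T \<subseteq> E" using st_basic unfolding mem_subtrees by blast+
    then show "T \<in> Pow V \<times> Pow E" by (cases T) auto
  qed
  then show ?thesis using f by (meson finite_Pow_iff finite_SigmaI finite_subset)
qed

lemma cnt_out: "\<not> W \<subseteq> V \<Longrightarrow> cnt V E W = 0"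
proof -
  assume "\<not> W \<subseteq> V"
  have "\<not> W \<subseteq> fst T" if "T \<in> subtrees V E" for T
    using that st_basic[of V E "fst T" "snd T"] \<open>\<not> W \<subseteq> V\<close> unfolding mem_subtrees by blast
  then have "{T \<in> subtrees V E. W \<subseteq> fst T} = {}" by blast
  then show ?thesis unfolding cnt_def by (metis card.empty)
qed

definition jn :: "'a \<Rightarrow> 'a \<Rightarrow> ('a set \<times> 'a set set) \<times> ('a set \<times> 'a set set) \<Rightarrow> ('a set \<times> 'a set set)" where
  "jn a b p = (fst (fst p) \<union> fst (snd p), snd (fst p) \<union> snd (snd p) \<union> {{a,b}})"

context bridge
begin

lemma jn_proj:
  assumes "T1 \<in> subtrees V1 E1" "T2 \<in> subtrees V2 E2"
  shows "fst (jn a b (T1,T2)) \<inter> V1 = fst T1" "snd (jn a b (T1,T2)) \<inter> E1 = snd T1"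
        "fst (jn a b (T1,T2)) \<inter> V2 = fst T2" "snd (jn a b (T1,T2)) \<inter> E2 = snd T2"
proof -
  have s1: "fst T1 \<subseteq> V1" "snd T1 \<subseteq> E1" using st_basic[of V1 E1 "fst T1" "snd T1"] assms(1) unfolding mem_subtrees by auto
  have s2: "fst T2 \<subseteq> V2" "snd T2 \<subseteq> E2" using st_basic[of V2 E2 "fst T2" "snd T2"] assms(2) unfolding mem_subtrees by auto
  have x12: "E1 \<inter> E2 = {}"
  proof (rule ccontr)
    assume "E1 \<inter> E2 \<noteq> {}"
    then obtain e where "e \<in> E1" "e \<in> E2" by blast
    then have "e \<subseteq> V1 \<inter> V2" "e \<noteq> {}" using E1 E2 ne1 by auto
    then show False using D by blast
  qed
  have ab1: "{a,b} \<notin> E1" using E1 b D by blast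
  have ab2: "{a,b} \<notin> E2" using E2 a D by blast
  show "fst (jn a b (T1,T2)) \<inter> V1 = fst T1" "fst (jn a b (T1,T2)) \<inter> V2 = fst T2"
    unfolding jn_def using s1 s2 D by auto
  show "snd (jn a b (T1,T2)) \<inter> E1 = snd T1" "snd (jn a b (T1,T2)) \<inter> E2 = snd T2"
    unfolding jn_def using s1 s2 x12 ab1 ab2 by auto
qed

lemma count:
  assumes f: "finite V1" "finite V2" "finite E1" "finite E2"
  shows "cnt (V1 \<union> V2) (E1 \<union> E2 \<union> {{a,b}}) W =
    cnt V1 E1 W + cnt V2 E2 W + cnt V1 E1 (insert a (W - V2)) * cnt V2 E2 (insert b (W - V1))"
proof -
  let ?G = "subtrees (V1 \<union> V2) (E1 \<union> E2 \<union> {{a,b}})"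
  define S where "S = {T \<in> ?G. W \<subseteq> fst T}"
  define A1 where "A1 = {T \<in> subtrees V1 E1. W \<subseteq> fst T}"
  define A2 where "A2 = {T \<in> subtrees V2 E2. W \<subseteq> fst T}"
  define X where "X = {T \<in> subtrees V1 E1. insert a (W - V2) \<subseteq> fst T}"
  define Y where "Y = {T \<in> subtrees V2 E2. insert b (W - V1) \<subseteq> fst T}"
  define J where "J = jn a b ` (X \<times> Y)"
  have fin1: "finite (subtrees V1 E1)" "finite (subtrees V2 E2)" using f finite_subtrees by auto
  have fA: "finite A1" "finite A2" "finite X" "finite Y" unfolding A1_def A2_def X_def Y_def
    using fin1 by auto
  have fJ: "finite J" unfolding J_def using fA by simp
  have SE: "S = A1 \<union> A2 \<union> J"
  proof
    show "S \<subseteq> A1 \<union> A2 \<union> J"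
    proof
      fix T assume TS: "T \<in> S"
      obtain V' E' where T: "T = (V',E')" by (cases T)
      have st: "is_subtree (V1 \<union> V2) (E1 \<union> E2 \<union> {{a,b}}) V' E'" and W: "W \<subseteq> V'"
        using TS unfolding S_def mem_subtrees T by auto
      have sub: "V' \<subseteq> V1 \<union> V2" "E' \<subseteq> E1 \<union> E2 \<union> {{a,b}}" using st_basic[OF st] by auto
      show "T \<in> A1 \<union> A2 \<union> J"
      proof (cases "{a,b} \<in> E'")
        case True
        note fw = fwd[OF st True]
        have x1: "insert a (W - V2) \<subseteq> V' \<inter> V1" using fw(3) W sub(1) a by blast
        have x2: "insert b (W - V1) \<subseteq> V' \<inter> V2" using fw(4) W sub(1) b by blast
        have "(V' \<inter> V1, E' \<inter> E1) \<in> X" unfolding X_def mem_subtrees using fw(1) x1 by simp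
        moreover have "(V' \<inter> V2, E' \<inter> E2) \<in> Y" unfolding Y_def mem_subtrees using fw(2) x2 by simp
        moreover have "V' \<inter> V1 \<union> V' \<inter> V2 = V'" using sub(1) by blast
        moreover have "E' \<inter> E1 \<union> E' \<inter> E2 \<union> {{a,b}} = E'" using sub(2) True by blast
        ultimately have "jn a b ((V' \<inter> V1, E' \<inter> E1), (V' \<inter> V2, E' \<inter> E2)) = T"
          "((V' \<inter> V1, E' \<inter> E1), (V' \<inter> V2, E' \<inter> E2)) \<in> X \<times> Y"
          unfolding jn_def T by simp_all
        then have "T \<in> J" unfolding J_def by (metis image_eqI)
        then show ?thesis by blast
      next
        case False
        from nobridge[OF st False] have "T \<in> A1 \<or> T \<in> A2"
          unfolding A1_def A2_def mem_subtrees using W T by auto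
        then show ?thesis by blast
      qed
    qed
  next
    show "A1 \<union> A2 \<union> J \<subseteq> S"
    proof
      fix T assume T: "T \<in> A1 \<union> A2 \<union> J"
      show "T \<in> S"
      proof (cases "T \<in> J")
        case True
        then obtain T1 T2 where t: "T1 \<in> X" "T2 \<in> Y" "T = jn a b (T1,T2)" unfolding J_def by auto
        have h: "is_subtree V1 E1 (fst T1) (snd T1)" "is_subtree V2 E2 (fst T2) (snd T2)"
          "insert a (W - V2) \<subseteq> fst T1" "insert b (W - V1) \<subseteq> fst T2"
          using t(1,2) unfolding X_def Y_def mem_subtrees by auto
        have "W \<subseteq> fst T1 \<union> fst T2" using h(3,4) D by blast
        moreover have "is_subtree (V1 \<union> V2) (E1 \<union> E2 \<union> {{a,b}}) (fst T1 \<union> fst T2) (snd T1 \<union> snd T2 \<union> {{a,b}})"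
          using join[OF h(1,2)] h(3,4) by blast
        ultimately show ?thesis unfolding S_def mem_subtrees t(3) jn_def by simp
      next
        case False
        then have "T \<in> A1 \<or> T \<in> A2" using T by blast
        have lift: "is_subtree (V1 \<union> V2) (E1 \<union> E2 \<union> {{a,b}}) (fst T) (snd T)"
          if "is_subtree V E (fst T) (snd T)" "V \<subseteq> V1 \<union> V2" "E \<subseteq> E1 \<union> E2 \<union> {{a,b}}" for V E
        proof -
          have "fst T \<subseteq> V" "snd T \<subseteq> E" using st_basic[OF that(1)] by blast+
          then have "fst T \<subseteq> V1 \<union> V2" "snd T \<subseteq> E1 \<union> E2 \<union> {{a,b}}" using that(2,3) by blast+
          then show ?thesis using subtree_restrict[OF that(1)] by blast
        qed
        from \<open>T \<in> A1 \<or> T \<in> A2\<close> show ?thesis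
        proof
          assume "T \<in> A1"
          then have "is_subtree V1 E1 (fst T) (snd T)" "W \<subseteq> fst T" unfolding A1_def mem_subtrees by auto
          then show ?thesis using lift[of V1 E1] unfolding S_def mem_subtrees by blast
        next
          assume "T \<in> A2"
          then have "is_subtree V2 E2 (fst T) (snd T)" "W \<subseteq> fst T" unfolding A2_def mem_subtrees by auto
          then show ?thesis using lift[of V2 E2] unfolding S_def mem_subtrees by blast
        qed
      qed
    qed
  qed
  have d12: "A1 \<inter> A2 = {}"
  proof (rule ccontr)
    assume "A1 \<inter> A2 \<noteq> {}"
    then obtain T where "T \<in> A1" "T \<in> A2" by blast
    then have "is_subtree V1 E1 (fst T) (snd T)" "is_subtree V2 E2 (fst T) (snd T)"
      unfolding A1_def A2_def mem_subtrees by blast+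
    then have "fst T \<subseteq> V1" "fst T \<subseteq> V2" "fst T \<noteq> {}" using st_basic by blast+
    then show False using D by blast
  qed
  have dJ: "(A1 \<union> A2) \<inter> J = {}"
  proof (rule ccontr)
    assume "(A1 \<union> A2) \<inter> J \<noteq> {}"
    then obtain T where T: "T \<in> A1 \<union> A2" "T \<in> J" by blast
    then obtain T1 T2 where "T1 \<in> X" "T2 \<in> Y" "T = jn a b (T1,T2)" unfolding J_def by auto
    then have "a \<in> fst T" "b \<in> fst T" unfolding X_def Y_def jn_def by auto
    moreover have "is_subtree V1 E1 (fst T) (snd T) \<or> is_subtree V2 E2 (fst T) (snd T)"
      using T(1) unfolding A1_def A2_def mem_subtrees by blast
    then have "fst T \<subseteq> V1 \<or> fst T \<subseteq> V2" using st_basic by blast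
    ultimately show False using D a b by blast
  qed
  have inj: "inj_on (jn a b) (X \<times> Y)"
  proof (rule inj_onI)
    fix p q assume p: "p \<in> X \<times> Y" and q: "q \<in> X \<times> Y" and e: "jn a b p = jn a b q"
    obtain T1 T2 where pp: "p = (T1,T2)" "T1 \<in> subtrees V1 E1" "T2 \<in> subtrees V2 E2"
      using p unfolding X_def Y_def by auto
    obtain U1 U2 where qq: "q = (U1,U2)" "U1 \<in> subtrees V1 E1" "U2 \<in> subtrees V2 E2"
      using q unfolding X_def Y_def by auto
    note j1 = jn_proj[OF pp(2,3)] and j2 = jn_proj[OF qq(2,3)]
    have "fst T1 = fst U1" "snd T1 = snd U1" "fst T2 = fst U2" "snd T2 = snd U2"
      using j1 j2 e pp(1) qq(1) by metis+
    then show "p = q" using pp(1) qq(1) by (simp add: prod_eq_iff)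
  qed
  have "card S = card A1 + card A2 + card J"
    using SE d12 dJ fA fJ by (simp add: card_Un_disjoint)
  moreover have "card J = card X * card Y" unfolding J_def using card_image[OF inj] card_cartesian_product by simp
  ultimately show ?thesis unfolding cnt_def S_def A1_def A2_def X_def Y_def by simp
qed

end



fun pe :: "'a list \<Rightarrow> 'a set set" where
  "pe [] = {}" | "pe [x] = {}" | "pe (x#y#zs) = insert {x,y} (pe (y#zs))"

lemma pe_sub: "e \<in> pe vs \<Longrightarrow> e \<subseteq> set vs"
  by (induction vs rule: pe.induct) auto

lemma pe_ne: "{} \<notin> pe vs"
  by (induction vs rule: pe.induct) auto

lemma pe_fin: "finite (pe vs)"
  by (induction vs rule: pe.induct) auto

lemma pe_append: "xs \<noteq> [] \<Longrightarrow> ys \<noteq> [] \<Longrightarrow> pe (xs @ ys) = pe xs \<union> pe ys \<union> {{last xs, hd ys}}"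
proof (induction xs rule: pe.induct)
  case 1 then show ?case by simp
next
  case (2 x) then show ?case by (cases ys) auto
next
  case (3 x y zs)
  then have IH: "pe ((y#zs)@ys) = pe (y#zs) \<union> pe ys \<union> {{last (y#zs), hd ys}}" by simp
  have "pe ((x#y#zs)@ys) = insert {x,y} (pe ((y#zs)@ys))" by simp
  also have "\<dots> = insert {x,y} (pe (y#zs) \<union> pe ys \<union> {{last (y#zs), hd ys}})" using IH by simp
  also have "\<dots> = pe (x#y#zs) \<union> pe ys \<union> {{last (x#y#zs), hd ys}}" by (simp add: insert_commute)
  finally show ?case .
qed

lemma pe_split: "e \<in> pe vs \<Longrightarrow> \<exists>xs ys. vs = xs @ ys \<and> xs \<noteq> [] \<and> ys \<noteq> [] \<and> e = {last xs, hd ys}"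
proof (induction vs rule: pe.induct)
  case 1 then show ?case by simp
next
  case (2 x) then show ?case by simp
next
  case (3 x y zs)
  show ?case
  proof (cases "e = {x,y}")
    case True
    then show ?thesis by (intro exI[of _ "[x]"] exI[of _ "y#zs"]) simp
  next
    case False
    then have "e \<in> pe (y#zs)" using 3(2) by simp
    then obtain xs ys where "y#zs = xs @ ys" "xs \<noteq> []" "ys \<noteq> []" "e = {last xs, hd ys}"
      using 3(1) by blast
    then show ?thesis by (intro exI[of _ "x#xs"] exI[of _ ys]) simp
  qed
qed

lemma no_cycle_empty: "\<not> has_cycle {}"
  unfolding has_cycle_def
proof (clarify)
  fix cs :: "'a list"
  assume c: "3 \<le> length cs" "\<forall>i<length cs. {cs ! i, cs ! ((i + 1) mod length cs)} \<in> {}"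
  have "0 < length cs" using c(1) by linarith
  then show False using c(2) by blast
qed

lemma single_iff: "is_subtree {x} {} V' E' \<longleftrightarrow> V' = {x} \<and> E' = {}"
proof
  assume "is_subtree {x} {} V' E'"
  from st_basic[OF this] show "V' = {x} \<and> E' = {}" by blast
next
  assume h: "V' = {x} \<and> E' = {}"
  have "sg_connected {x} {}" unfolding sg_connected_def by simp
  moreover have "\<not> has_cycle {}" by (rule no_cycle_empty)
  ultimately show "is_subtree {x} {} V' E'" unfolding is_subtree_def using h by simp
qed

lemma cnt_single: "cnt {x} {} W = (if W \<subseteq> {x} then 1 else 0)"
proof -
  have "subtrees {x} {} = {({x},{})}"
  proof (rule set_eqI)
    fix T :: "'a set \<times> 'a set set"
    show "T \<in> subtrees {x} {} \<longleftrightarrow> T \<in> {({x},{})}"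
      unfolding mem_subtrees single_iff by (cases T) simp
  qed
  then have eq: "{T \<in> subtrees {x} {}. W \<subseteq> fst T} = (if W \<subseteq> {x} then {({x},{})} else {})" by auto
  show ?thesis unfolding cnt_def eq by simp
qed

definition pcnt :: "'a list \<Rightarrow> 'a set \<Rightarrow> nat" where
  "pcnt vs W = cnt (set vs) (pe vs) W"

lemma pcnt_single: "pcnt [x] W = (if W \<subseteq> {x} then 1 else 0)"
  unfolding pcnt_def by (simp add: cnt_single)

lemma pcnt_cons:
  assumes "distinct (x#y#zs)"
  shows "pcnt (x#y#zs) W = (if W \<subseteq> {x} then 1 else 0) + pcnt (y#zs) W +
     (if insert x (W - set (y#zs)) \<subseteq> {x} then 1 else 0) * pcnt (y#zs) (insert y (W - {x}))"
proof -
  interpret bridge "{x}" "set (y#zs)" "{}" "pe (y#zs)" x y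
    proof
    show "{x} \<inter> set (y # zs) = {}" using assms by simp
    show "\<forall>e\<in>{}. e \<subseteq> {x}" by simp
    show "\<forall>e\<in>pe (y # zs). e \<subseteq> set (y # zs)" using pe_sub by blast
    show "x \<in> {x}" "y \<in> set (y#zs)" by simp_all
    show "{} \<notin> {}" by simp
    show "{} \<notin> pe (y#zs)" by (rule pe_ne)
  qed
  have e1: "set (x#y#zs) = {x} \<union> set (y#zs)" by auto
  have e2: "pe (x#y#zs) = {} \<union> pe (y#zs) \<union> {{x,y}}" by simp
  have "pcnt (x#y#zs) W = cnt ({x} \<union> set (y#zs)) ({} \<union> pe (y#zs) \<union> {{x,y}}) W"
    unfolding pcnt_def e1 e2 ..
  also have "\<dots> = cnt {x} {} W + cnt (set (y#zs)) (pe (y#zs)) W +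
    cnt {x} {} (insert x (W - set (y#zs))) * cnt (set (y#zs)) (pe (y#zs)) (insert y (W - {x}))"
    by (rule count) (simp_all add: pe_fin)
  finally show ?thesis by (simp only: pcnt_def cnt_single)
qed

lemma edge_in_path:
  assumes d: "distinct vs" and e: "{u,w} \<in> pe vs" and T: "is_subtree (set vs) (pe vs) V' E'"
    and uw: "u \<in> V'" "w \<in> V'"
  shows "{u,w} \<in> E'"
proof -
  obtain xs ys where s: "vs = xs @ ys" "xs \<noteq> []" "ys \<noteq> []" "{u,w} = {last xs, hd ys}"
    using pe_split[OF e] by blast
  have dx: "set xs \<inter> set ys = {}" using d s(1) by simp
  interpret bridge "set xs" "set ys" "pe xs" "pe ys" "last xs" "hd ys"
    proof
    show "set xs \<inter> set ys = {}" using dx .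
    show "\<forall>e\<in>pe xs. e \<subseteq> set xs" "\<forall>e\<in>pe ys. e \<subseteq> set ys" using pe_sub by blast+
    show "last xs \<in> set xs" "hd ys \<in> set ys" using s(2,3) by simp_all
    show "{} \<notin> pe xs" by (rule pe_ne)
    show "{} \<notin> pe ys" by (rule pe_ne)
  qed
  have pv: "pe vs = pe xs \<union> pe ys \<union> {{last xs, hd ys}}" using pe_append[OF s(2,3)] s(1) by simp
  have sv: "set vs = set xs \<union> set ys" using s(1) by simp
  have T': "is_subtree (set xs \<union> set ys) (pe xs \<union> pe ys \<union> {{last xs, hd ys}}) V' E'"
    using T unfolding sv pv .
  have "last xs \<in> {u,w}" "hd ys \<in> {u,w}" using s(4) by simp_all
  then have ab: "last xs \<in> V'" "hd ys \<in> V'" using uw by auto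
  have lx: "last xs \<in> set xs" "hd ys \<in> set ys" using s(2,3) by auto
  show ?thesis
  proof (rule ccontr)
    assume "{u,w} \<notin> E'"
    then have "{last xs, hd ys} \<notin> E'" using s(4) by simp
    from nobridge[OF T' this] have "V' \<subseteq> set xs \<or> V' \<subseteq> set ys"
      using st_basic[of "set xs" "pe xs" V' E'] st_basic[of "set ys" "pe ys" V' E'] by blast
    then show False using ab lx dx by blast
  qed
qed



definition hexV :: "nat \<Rightarrow> (nat \<times> nat) set" where
  "hexV i = {i} \<times> {0..<6}"

definition ed :: "nat \<Rightarrow> nat \<Rightarrow> (nat \<times> nat) set" where
  "ed i j = {(i,j), (i, (j+1) mod 6)}"

definition hexE :: "nat \<Rightarrow> (nat \<times> nat) set set" where
  "hexE i = {{(i, j), (i, (j + 1) mod 6)} | j. j < 6}"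

definition Pk :: "nat \<Rightarrow> nat \<Rightarrow> (nat \<times> nat) list" where
  "Pk i k = map (\<lambda>j. (i, (k+1+j) mod 6)) [0,1,2,3,4,5]"

definition Uk :: "nat \<Rightarrow> nat \<Rightarrow> (nat \<times> nat) set" where
  "Uk i k = set (if k = 0 then [] else take (Suc k) [(i,0),(i,1),(i,2),(i,3),(i,4),(i,5)])"

lemma two_nat: "Suc (Suc 0) = (2::nat)" by simp

lemma lt6: "x < (6::nat) \<longleftrightarrow> x=0 \<or> x=1 \<or> x=2 \<or> x=3 \<or> x=4 \<or> x=5" by arith

lemma k6_cases: "(k::nat) < 6 \<Longrightarrow> k = 0 \<or> k = 1 \<or> k = 2 \<or> k = 3 \<or> k = 4 \<or> k = 5"
  by arith

lemma hexE_img: "hexE i = ed i ` {0..<6}" unfolding hexE_def ed_def by auto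

lemma hexE_explicit: "hexE i = {ed i 0, ed i 1, ed i 2, ed i 3, ed i 4, ed i 5}"
proof -
  have "hexE i = ed i ` {0..<6}" by (rule hexE_img)
  also have "{0..<6} = {0,1,2,3,4,(5::nat)}" by (auto simp: lt6)
  finally show ?thesis by simp
qed

lemma ed_vals: "ed i 0 = {(i,0),(i,1)}" "ed i 1 = {(i,1),(i,2)}" "ed i 2 = {(i,2),(i,3)}"
  "ed i 3 = {(i,3),(i,4)}" "ed i 4 = {(i,4),(i,5)}" "ed i 5 = {(i,5),(i,0)}"
  unfolding ed_def by (simp_all add: two_nat)

lemma hexV_explicit: "hexV i = {(i,0),(i,1),(i,2),(i,3),(i,4),(i,5)}"
  unfolding hexV_def by (auto simp: lt6)

lemma ed_inj: "j < 6 \<Longrightarrow> k < 6 \<Longrightarrow> ed i j = ed i k \<Longrightarrow> j = k"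
  unfolding ed_def using k6_cases[of j] k6_cases[of k] by (auto simp: doubleton_eq_iff two_nat)

lemma Pk_set: "k < 6 \<Longrightarrow> set (Pk i k) = hexV i"
  unfolding hexV_explicit Pk_def by (drule k6_cases) auto

lemma Pk_dist: "k < 6 \<Longrightarrow> distinct (Pk i k)"
  unfolding Pk_def by (drule k6_cases) auto

lemma Pk_pe0: "k < 6 \<Longrightarrow> pe (Pk i k) = ed i ` set (map (\<lambda>j. (k+1+j) mod 6) [0,1,2,3,4])"
  unfolding Pk_def by (drule k6_cases) (elim disjE; simp add: ed_def two_nat)

lemma Pk_idx: "(k::nat) < 6 \<Longrightarrow> set (map (\<lambda>j. (k+1+j) mod 6) [0,1,2,3,4]) = {0..<6} - {k}"
  by (drule k6_cases) (elim disjE; auto simp: lt6)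

lemma Pk_pe: "k < 6 \<Longrightarrow> pe (Pk i k) = hexE i - {ed i k}"
proof -
  assume k: "k < 6"
  have inj: "inj_on (ed i) {0..<6}" using ed_inj by (meson atLeastLessThan_iff inj_onI)
  have "pe (Pk i k) = ed i ` ({0..<6} - {k})" unfolding Pk_pe0[OF k] by (simp only: Pk_idx[OF k])
  also have "\<dots> = ed i ` {0..<6} - ed i ` {k}" by (rule inj_on_image_set_diff[OF inj]) (use k in auto)
  finally show ?thesis using hexE_img by simp
qed

lemma Uk_mem: "k < 6 \<Longrightarrow> (i',j) \<in> Uk i k \<longleftrightarrow> i' = i \<and> 0 < k \<and> j \<le> k"
  unfolding Uk_def by (drule k6_cases) (elim disjE; simp only: if_False if_True; simp; arith)

lemma Uk_fst: "x \<in> Uk i k \<Longrightarrow> fst x = i"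
  unfolding Uk_def by (cases "k = 0") (simp, fastforce dest: in_set_takeD)



lemma ed_sub: "j < 6 \<Longrightarrow> ed i j \<subseteq> hexV i"
  unfolding ed_def hexV_def by auto

lemma ed_mem: "(i,j) \<in> ed i j" "(i, (j+1) mod 6) \<in> ed i j"
  unfolding ed_def by auto

lemma hex_cycle_list:
  "\<forall>m<6. {[(i,0),(i,1),(i,2),(i,3),(i,4),(i,5)] ! m,
           [(i,0),(i,1),(i,2),(i,3),(i,4),(i,5)] ! ((m + 1) mod 6)} = ed i m"
  unfolding ed_def by (auto simp: lt6 two_nat)

lemma hex_not_all:
  assumes "is_subtree (hexV i) (hexE i) V' E'"
  shows "\<exists>k<6. ed i k \<notin> E'"
proof (rule ccontr)
  assume "\<not> ?thesis"
  then have all: "\<forall>k<6. ed i k \<in> E'" by blast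
  let ?cs = "[(i,0),(i,1),(i,2),(i,3),(i,(4::nat)),(i,(5::nat))]"
  have "length ?cs \<ge> 3" "distinct ?cs" by simp_all
  moreover have "\<forall>m < length ?cs. {?cs ! m, ?cs ! ((m + 1) mod length ?cs)} \<in> E'"
    using hex_cycle_list[of i] all by simp
  ultimately have "has_cycle E'" unfolding has_cycle_def by blast
  then show False using assms unfolding is_subtree_def by blast
qed

lemma piece:
  assumes k: "k < 6"
  shows "{T \<in> subtrees (hexV i) (hexE i). W \<subseteq> fst T \<and> ed i k \<notin> snd T \<and> (\<forall>j<k. ed i j \<in> snd T)}
       = {T \<in> subtrees (set (Pk i k)) (pe (Pk i k)). W \<union> Uk i k \<subseteq> fst T}"
proof (rule set_eqI)
  fix T :: "(nat \<times> nat) set \<times> (nat \<times> nat) set set"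
  obtain V' E' where T: "T = (V',E')" by (cases T)
  have PS: "set (Pk i k) = hexV i" using Pk_set[OF k] .
  have PE: "pe (Pk i k) = hexE i - {ed i k}" using Pk_pe[OF k] .
  show "T \<in> {T \<in> subtrees (hexV i) (hexE i). W \<subseteq> fst T \<and> ed i k \<notin> snd T \<and> (\<forall>j<k. ed i j \<in> snd T)}
       \<longleftrightarrow> T \<in> {T \<in> subtrees (set (Pk i k)) (pe (Pk i k)). W \<union> Uk i k \<subseteq> fst T}"
  proof
    assume "T \<in> {T \<in> subtrees (hexV i) (hexE i). W \<subseteq> fst T \<and> ed i k \<notin> snd T \<and> (\<forall>j<k. ed i j \<in> snd T)}"
    then have st: "is_subtree (hexV i) (hexE i) V' E'" and W: "W \<subseteq> V'" and nk: "ed i k \<notin> E'"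
      and lt: "\<forall>j<k. ed i j \<in> E'" unfolding T mem_subtrees by auto
    have b: "V' \<subseteq> hexV i" "E' \<subseteq> hexE i" "\<forall>e\<in>E'. e \<subseteq> V'" using st_basic[OF st] by auto
    have "E' \<subseteq> hexE i - {ed i k}" using b(2) nk by blast
    then have st': "is_subtree (set (Pk i k)) (pe (Pk i k)) V' E'"
      unfolding PS PE by (rule subtree_restrict[OF st b(1)])
    have U: "Uk i k \<subseteq> V'"
    proof
      fix x assume x: "x \<in> Uk i k"
      obtain a j where xe: "x = (a,j)" by (cases x)
      have "a = i" "0 < k" "j \<le> k" using x Uk_mem[OF k] unfolding xe by auto
      show "x \<in> V'"
      proof (cases "j < k")
        case True
        then have "ed i j \<in> E'" using lt by blast
        then show ?thesis using b(3) ed_mem(1)[of i j] xe \<open>a = i\<close> by blast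
      next
        case False
        then have jk: "j = k" using \<open>j \<le> k\<close> by simp
        have e1: "ed i (k - 1) \<in> E'" using lt \<open>0 < k\<close> by simp
        have "(k - 1 + 1) mod 6 = k" using k \<open>0 < k\<close> by simp
        then have "(i,k) \<in> ed i (k - 1)" using ed_mem(2)[of i "k - 1"] by simp
        then have "(i,k) \<in> V'" using b(3) e1 by blast
        then show ?thesis using xe \<open>a = i\<close> jk by simp
      qed
    qed
    show "T \<in> {T \<in> subtrees (set (Pk i k)) (pe (Pk i k)). W \<union> Uk i k \<subseteq> fst T}"
      unfolding T mem_subtrees using st' W U by simp
  next
    assume "T \<in> {T \<in> subtrees (set (Pk i k)) (pe (Pk i k)). W \<union> Uk i k \<subseteq> fst T}"
    then have st: "is_subtree (set (Pk i k)) (pe (Pk i k)) V' E'" and W: "W \<subseteq> V'" and U: "Uk i k \<subseteq> V'"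
      unfolding T mem_subtrees by auto
    have b: "V' \<subseteq> hexV i" "E' \<subseteq> hexE i - {ed i k}" using st_basic[OF st] unfolding PS PE by auto
    have st': "is_subtree (hexV i) (hexE i) V' E'" using subtree_restrict[OF st] b by blast
    have nk: "ed i k \<notin> E'" using b by blast
    have lt: "\<forall>j<k. ed i j \<in> E'"
    proof (intro allI impI)
      fix j assume j: "j < k"
      have j6: "j < 6" "j + 1 < 6" using j k by auto
      have "ed i j \<in> hexE i" using hexE_img j6 by auto
      moreover have "ed i j \<noteq> ed i k" using ed_inj[OF j6(1) k] j by auto
      ultimately have "ed i j \<in> pe (Pk i k)" unfolding PE by blast
      then have inpe: "{(i,j), (i, (j+1) mod 6)} \<in> pe (Pk i k)" unfolding ed_def .
      have "(i,j) \<in> Uk i k" "(i, (j+1) mod 6) \<in> Uk i k" using Uk_mem[OF k] j j6 by auto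
      then have "(i,j) \<in> V'" "(i, (j+1) mod 6) \<in> V'" using U by blast+
      from edge_in_path[OF Pk_dist[OF k] inpe st this] show "ed i j \<in> E'" unfolding ed_def .
    qed
    show "T \<in> {T \<in> subtrees (hexV i) (hexE i). W \<subseteq> fst T \<and> ed i k \<notin> snd T \<and> (\<forall>j<k. ed i j \<in> snd T)}"
      unfolding T mem_subtrees using st' W nk lt by simp
  qed
qed

lemma cnt_hex: "cnt (hexV i) (hexE i) W = (\<Sum>k<6. pcnt (Pk i k) (W \<union> Uk i k))"
proof -
  define A where "A k = {T \<in> subtrees (hexV i) (hexE i). W \<subseteq> fst T \<and> ed i k \<notin> snd T \<and> (\<forall>j<k. ed i j \<in> snd T)}" for k
  have fin: "finite (subtrees (hexV i) (hexE i))"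
    by (rule finite_subtrees) (simp_all add: hexV_def hexE_img)
  have U: "{T \<in> subtrees (hexV i) (hexE i). W \<subseteq> fst T} = (\<Union>k\<in>{..<6}. A k)"
  proof
    show "{T \<in> subtrees (hexV i) (hexE i). W \<subseteq> fst T} \<subseteq> (\<Union>k\<in>{..<6}. A k)"
    proof
      fix T assume T: "T \<in> {T \<in> subtrees (hexV i) (hexE i). W \<subseteq> fst T}"
      then have st: "is_subtree (hexV i) (hexE i) (fst T) (snd T)" "W \<subseteq> fst T" unfolding mem_subtrees by auto
      obtain k0 where "k0 < 6" "ed i k0 \<notin> snd T" using hex_not_all[OF st(1)] by blast
      then have "\<exists>k. ed i k \<notin> snd T" by blast
      then obtain k where k: "ed i k \<notin> snd T" "\<forall>m<k. \<not> ed i m \<notin> snd T"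
        using exists_least_iff[of "\<lambda>k. ed i k \<notin> snd T"] by blast
      have "k \<le> k0" using k(2) \<open>ed i k0 \<notin> snd T\<close> by (meson not_le)
      then have "k < 6" using \<open>k0 < 6\<close> by simp
      moreover have "T \<in> A k" unfolding A_def using T k by auto
      ultimately show "T \<in> (\<Union>k\<in>{..<6}. A k)" by blast
    qed
  next
    show "(\<Union>k\<in>{..<6}. A k) \<subseteq> {T \<in> subtrees (hexV i) (hexE i). W \<subseteq> fst T}"
      unfolding A_def by blast
  qed
  have disj: "\<forall>a\<in>{..<6}. \<forall>b\<in>{..<6}. a \<noteq> b \<longrightarrow> A a \<inter> A b = {}"
  proof (intro ballI impI)
    fix a b :: nat assume "a \<noteq> b"
    then have "a < b \<or> b < a" by arith
    then show "A a \<inter> A b = {}"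
    proof
      assume "a < b"
      have "T \<notin> A b" if "T \<in> A a" for T
      proof
        assume "T \<in> A b"
        then have "ed i a \<in> snd T" unfolding A_def using \<open>a < b\<close> by blast
        moreover have "ed i a \<notin> snd T" using that unfolding A_def by blast
        ultimately show False by blast
      qed
      then show ?thesis by blast
    next
      assume "b < a"
      have "T \<notin> A a" if "T \<in> A b" for T
      proof
        assume "T \<in> A a"
        then have "ed i b \<in> snd T" unfolding A_def using \<open>b < a\<close> by blast
        moreover have "ed i b \<notin> snd T" using that unfolding A_def by blast
        ultimately show False by blast
      qed
      then show ?thesis by blast
    qed
  qed
  have finA: "\<forall>k\<in>{..<6}. finite (A k)" unfolding A_def using fin by simp
  have "cnt (hexV i) (hexE i) W = card (\<Union>k\<in>{..<6}. A k)" unfolding cnt_def U ..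
  also have "\<dots> = (\<Sum>k<6. card (A k))" using card_UN_disjoint[OF _ finA disj] by simp
  also have "\<dots> = (\<Sum>k<6. pcnt (Pk i k) (W \<union> Uk i k))"
  proof (rule sum.cong)
    fix k assume "k \<in> {..<6::nat}"
    then have "k < 6" by simp
    show "card (A k) = pcnt (Pk i k) (W \<union> Uk i k)"
      unfolding A_def piece[OF \<open>k < 6\<close>] pcnt_def cnt_def ..
  qed simp
  finally show ?thesis .
qed



lemma lessThan6: "{..<6::nat} = {0,1,2,3,4,5}" by (auto simp: lt6)

lemmas hexcalc = cnt_hex lessThan6 Pk_def Uk_def pcnt_cons pcnt_single insert_Diff_if

lemma hex_all: "cnt (hexV i) (hexE i) {} = 36"
  by (simp add: hexcalc)

lemma hex_one: "cnt (hexV i) (hexE i) {(i,0)} = 21" "cnt (hexV i) (hexE i) {(i,1)} = 21"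
  "cnt (hexV i) (hexE i) {(i,2)} = 21" "cnt (hexV i) (hexE i) {(i,3)} = 21"
  by (simp_all add: hexcalc)

lemma hex_two: "cnt (hexV i) (hexE i) {(i,0),(i,1)} = 16" "cnt (hexV i) (hexE i) {(i,0),(i,2)} = 13"
  "cnt (hexV i) (hexE i) {(i,0),(i,3)} = 12"
  by (simp_all add: hexcalc)



lemma pp_verts_Suc: "pp_verts (Suc n) = pp_verts n \<union> hexV n"
  unfolding pp_verts_def hexV_def by auto

lemma hex_edges_Suc: "hex_edges (Suc n) = hex_edges n \<union> hexE n"
  unfolding hex_edges_def hexE_def by (auto simp: less_Suc_eq)

lemma cut_edges_Suc: "0 < n \<Longrightarrow> cut_edges (Suc n) ds = cut_edges n ds \<union> {{(n-1, out_vertex ds (n-1)), (n,0)}}"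
  unfolding cut_edges_def by (auto simp: less_Suc_eq)

lemma pp_edges_Suc: "0 < n \<Longrightarrow> pp_edges (Suc n) ds = pp_edges n ds \<union> hexE n \<union> {{(n-1, out_vertex ds (n-1)), (n,0)}}"
  unfolding pp_edges_def using hex_edges_Suc cut_edges_Suc by auto

lemma out_vertex_snoc: "i \<le> length ds \<Longrightarrow> out_vertex (ds @ [d]) i = out_vertex ds i"
  unfolding out_vertex_def by (auto simp: nth_append)

lemma pp_edges_snoc: "n \<le> length ds + 2 \<Longrightarrow> pp_edges n (ds @ [d]) = pp_edges n ds"
  unfolding pp_edges_def cut_edges_def using out_vertex_snoc
  by (smt (verit, ccfv_SIG) Collect_cong Suc_le_eq add_2_eq_Suc' le_less_trans not_less_eq_eq)

lemma out_lt6: "\<forall>x\<in>set ds. x < 6 \<Longrightarrow> (i = 0 \<or> i \<le> length ds) \<Longrightarrow> out_vertex ds i < 6"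
  unfolding out_vertex_def by (cases i) auto

lemma pp_edges_sub:
  assumes "\<forall>x\<in>set ds. x < 6" "n \<le> length ds + 2"
  shows "\<forall>e\<in>pp_edges n ds. e \<subseteq> pp_verts n"
proof
  fix e assume "e \<in> pp_edges n ds"
  then consider (h) "e \<in> hex_edges n" | (c) "e \<in> cut_edges n ds" unfolding pp_edges_def by blast
  then show "e \<subseteq> pp_verts n"
  proof cases
    case h then show ?thesis unfolding hex_edges_def pp_verts_def by auto
  next
    case c
    then obtain i where i: "Suc i < n" "e = {(i, out_vertex ds i), (Suc i, 0)}" unfolding cut_edges_def by blast
    have "out_vertex ds i < 6" using out_lt6[OF assms(1)] i(1) assms(2) by (cases i) auto
    then show ?thesis using i unfolding pp_verts_def by auto
  qed
qed

lemma pp_edges_ne: "{} \<notin> pp_edges n ds"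
  unfolding pp_edges_def hex_edges_def cut_edges_def by auto

lemma pp_fin: "finite (pp_verts n)" "finite (pp_edges n ds)"
proof -
  show "finite (pp_verts n)" unfolding pp_verts_def by simp
  have "hex_edges n = (\<lambda>(i,j). {(i, j), (i, (j + 1) mod 6)}) ` ({0..<n} \<times> {0..<6})"
    unfolding hex_edges_def by (auto; blast)
  moreover have "cut_edges n ds = (\<lambda>i. {(i, out_vertex ds i), (Suc i, 0)}) ` {i. Suc i < n}"
    unfolding cut_edges_def by auto
  moreover have "finite {i. Suc i < n}" by (rule finite_subset[of _ "{..<n}"]) auto
  ultimately show "finite (pp_edges n ds)" unfolding pp_edges_def by simp
qed

lemma hexE_fin: "finite (hexE i)" using hexE_img by simp

lemma hexE_sub: "\<forall>e\<in>hexE i. e \<subseteq> hexV i" using hexE_img ed_sub by auto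

lemma pp1: "pp_verts 1 = hexV 0" "pp_edges 1 ds = hexE 0"
proof -
  show "pp_verts 1 = hexV 0" unfolding pp_verts_def hexV_def by auto
  have "hex_edges 1 = hexE 0" using hex_edges_Suc[of 0] unfolding hex_edges_def by simp
  moreover have "cut_edges 1 ds = {}" unfolding cut_edges_def by simp
  ultimately show "pp_edges 1 ds = hexE 0" unfolding pp_edges_def by simp
qed

locale chain_step =
  fixes n :: nat and ds :: "nat list"
  assumes n0: "0 < n" and nl: "n \<le> length ds + 1" and d6: "\<forall>x\<in>set ds. x < 6"
begin

definition ov where "ov = out_vertex ds (n-1)"

lemma o6: "ov < 6"
  unfolding ov_def using out_lt6[OF d6] nl by (cases n) auto

sublocale bridge "pp_verts n" "hexV n" "pp_edges n ds" "hexE n" "(n-1, ov)" "(n, 0)"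
proof
  show "pp_verts n \<inter> hexV n = {}" unfolding pp_verts_def hexV_def by auto
  show "\<forall>e\<in>pp_edges n ds. e \<subseteq> pp_verts n" using pp_edges_sub d6 nl by simp
  show "\<forall>e\<in>hexE n. e \<subseteq> hexV n" by (rule hexE_sub)
  show "(n - 1, ov) \<in> pp_verts n" using o6 n0 unfolding pp_verts_def by auto
  show "(n, 0) \<in> hexV n" unfolding hexV_def by auto
  show "{} \<notin> pp_edges n ds" by (rule pp_edges_ne)
  show "{} \<notin> hexE n" unfolding hexE_def by auto
qed

lemma G_Suc: "pp_verts (Suc n) = pp_verts n \<union> hexV n"
  "pp_edges (Suc n) ds = pp_edges n ds \<union> hexE n \<union> {{(n-1, ov), (n,0)}}"
  using pp_verts_Suc pp_edges_Suc[OF n0] unfolding ov_def by auto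

lemma R1: "STN (pp_verts (Suc n)) (pp_edges (Suc n) ds) =
   STN (pp_verts n) (pp_edges n ds) + 36 + cnt (pp_verts n) (pp_edges n ds) {(n-1, ov)} * 21"
proof -
  have "STN (pp_verts (Suc n)) (pp_edges (Suc n) ds) = cnt (pp_verts n \<union> hexV n) (pp_edges n ds \<union> hexE n \<union> {{(n-1, ov), (n,0)}}) {}"
    unfolding STN_cnt G_Suc ..
  also have "\<dots> = cnt (pp_verts n) (pp_edges n ds) {} + cnt (hexV n) (hexE n) {} +
     cnt (pp_verts n) (pp_edges n ds) (insert (n-1, ov) ({} - hexV n)) * cnt (hexV n) (hexE n) (insert (n,0) ({} - pp_verts n))"
    by (rule count) (simp_all add: pp_fin hexE_fin hexV_def)
  also have "\<dots> = STN (pp_verts n) (pp_edges n ds) + 36 + cnt (pp_verts n) (pp_edges n ds) {(n-1, ov)} * 21"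
    using hex_all[of n] hex_one(1)[of n] by (simp add: STN_cnt)
  finally show ?thesis .
qed

lemma R2:
  assumes v: "v < 6"
  shows "cnt (pp_verts (Suc n)) (pp_edges (Suc n) ds) {(n,v)} =
    cnt (hexV n) (hexE n) {(n,v)} + cnt (pp_verts n) (pp_edges n ds) {(n-1, ov)} * cnt (hexV n) (hexE n) {(n,0),(n,v)}"
proof -
  have nv: "(n,v) \<notin> pp_verts n" "(n,v) \<in> hexV n" unfolding pp_verts_def hexV_def using v by auto
  have "cnt (pp_verts (Suc n)) (pp_edges (Suc n) ds) {(n,v)} = cnt (pp_verts n \<union> hexV n) (pp_edges n ds \<union> hexE n \<union> {{(n-1, ov), (n,0)}}) {(n,v)}"
    unfolding G_Suc ..
  also have "\<dots> = cnt (pp_verts n) (pp_edges n ds) {(n,v)} + cnt (hexV n) (hexE n) {(n,v)} +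
     cnt (pp_verts n) (pp_edges n ds) (insert (n-1, ov) ({(n,v)} - hexV n)) * cnt (hexV n) (hexE n) (insert (n,0) ({(n,v)} - pp_verts n))"
    by (rule count) (simp_all add: pp_fin hexE_fin hexV_def)
  also have "\<dots> = cnt (hexV n) (hexE n) {(n,v)} + cnt (pp_verts n) (pp_edges n ds) {(n-1, ov)} * cnt (hexV n) (hexE n) {(n,0),(n,v)}"
  proof -
    have "{(n,v)} - pp_verts n = {(n,v)}" "{(n,v)} - hexV n = {}" using nv by auto
    then show ?thesis using nv cnt_out[of "{(n,v)}" "pp_verts n" "pp_edges n ds"] by simp
  qed
  finally show ?thesis .
qed

end



definition AA :: "nat \<Rightarrow> nat list \<Rightarrow> real" where
  "AA n ds = real (STN (pp_verts n) (pp_edges n ds))"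

definition BB :: "nat \<Rightarrow> nat list \<Rightarrow> nat \<Rightarrow> real" where
  "BB n ds v = real (cnt (pp_verts n) (pp_edges n ds) {(n-1, v)})"

definition ww :: "nat \<Rightarrow> real" where
  "ww v = (if v = 1 then 16 else if v = 2 then 13 else 12)"

lemma step_lemmas:
  assumes len: "length ds = m" and S: "set ds \<subseteq> {1,2,3}" and d: "d \<in> {1,2,3}"
  shows "AA (m+3) (ds@[d]) = AA (m+2) ds + 36 + 21 * BB (m+2) ds d"
    "v \<in> {1,2,3} \<Longrightarrow> BB (m+3) (ds@[d]) v = 21 + BB (m+2) ds d * ww v"
proof -
  interpret chain_step "m+2" "ds@[d]"
    by unfold_locales (use len S d in auto)
  have ov: "ov = d" unfolding ov_def out_vertex_def using len by (simp add: nth_append)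
  have pe: "pp_edges (m+2) (ds@[d]) = pp_edges (m+2) ds" using pp_edges_snoc len by simp
  have r1: "STN (pp_verts (Suc (m+2))) (pp_edges (Suc (m+2)) (ds@[d])) =
   STN (pp_verts (m+2)) (pp_edges (m+2) (ds@[d])) + 36 + cnt (pp_verts (m+2)) (pp_edges (m+2) (ds@[d])) {(m+2-1, ov)} * 21"
    by (rule R1)
  show "AA (m+3) (ds@[d]) = AA (m+2) ds + 36 + 21 * BB (m+2) ds d"
    using r1 unfolding AA_def BB_def pe ov by (simp add: eval_nat_numeral)
  assume v: "v \<in> {1,2,3}"
  then have v6: "v < 6" by auto
  have r2: "cnt (pp_verts (Suc (m+2))) (pp_edges (Suc (m+2)) (ds@[d])) {(m+2,v)} =
    cnt (hexV (m+2)) (hexE (m+2)) {(m+2,v)} + cnt (pp_verts (m+2)) (pp_edges (m+2) (ds@[d])) {(m+2-1, ov)} * cnt (hexV (m+2)) (hexE (m+2)) {(m+2,0),(m+2,v)}"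
    by (rule R2[OF v6])
  have h1: "cnt (hexV (m+2)) (hexE (m+2)) {(m+2,v)} = 21" using v hex_one by auto
  have h2: "real (cnt (hexV (m+2)) (hexE (m+2)) {(m+2,0),(m+2,v)}) = ww v" using v hex_two unfolding ww_def by auto
  show "BB (m+3) (ds@[d]) v = 21 + BB (m+2) ds d * ww v"
    using r2 h1 h2[symmetric] unfolding BB_def pe ov by (simp add: eval_nat_numeral)
qed

lemma base_lemmas:
  "AA 2 [] = 513" "v \<in> {1,2,3} \<Longrightarrow> BB 2 [] v = 21 + 21 * ww v"
proof -
  interpret chain_step 1 "[]" by unfold_locales auto
  have ov: "ov = 0" unfolding ov_def out_vertex_def by simp
  have r1: "STN (pp_verts (Suc 1)) (pp_edges (Suc 1) []) =
   STN (pp_verts 1) (pp_edges 1 []) + 36 + cnt (pp_verts 1) (pp_edges 1 []) {(1-1, ov)} * 21"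
    by (rule R1)
  have g1: "STN (pp_verts 1) (pp_edges 1 []) = 36" "cnt (pp_verts 1) (pp_edges 1 []) {(0,0)} = 21"
    unfolding pp1 using hex_all hex_one by (simp_all add: STN_cnt)
  show "AA 2 [] = 513" using r1 g1 unfolding AA_def ov by (simp add: numeral_2_eq_2)
  assume v: "v \<in> {1,2,3}"
  then have v6: "v < 6" by auto
  have r2: "cnt (pp_verts (Suc 1)) (pp_edges (Suc 1) []) {(1,v)} =
    cnt (hexV 1) (hexE 1) {(1,v)} + cnt (pp_verts 1) (pp_edges 1 []) {(1-1, ov)} * cnt (hexV 1) (hexE 1) {(1,0),(1,v)}"
    by (rule R2[OF v6])
  have h1: "cnt (hexV 1) (hexE 1) {(1,v)} = 21" using v hex_one by auto
  have h2: "real (cnt (hexV 1) (hexE 1) {(1,0),(1,v)}) = ww v" using v hex_two unfolding ww_def by auto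
  show "BB 2 [] v = 21 + 21 * ww v"
    using r2 h1 h2[symmetric] g1 unfolding BB_def ov by (simp add: numeral_2_eq_2)
qed



lemma choices_m2: "pp_choices (m+2) = {ds. length ds = m \<and> set ds \<subseteq> {1,2,3}}"
  unfolding pp_choices_def by simp

lemma choices_fin: "finite (pp_choices n)"
proof -
  have "pp_choices n = {xs. set xs \<subseteq> {1,2,3} \<and> length xs = n - 2}" unfolding pp_choices_def by auto
  then show ?thesis using finite_lists_length_eq[of "{1,2,3::nat}" "n-2"] by simp
qed

lemma choices_Suc: "pp_choices (m+3) = (\<lambda>(ds,d). ds @ [d]) ` (pp_choices (m+2) \<times> {1,2,3})"
proof
  show "pp_choices (m+3) \<subseteq> (\<lambda>(ds,d). ds @ [d]) ` (pp_choices (m+2) \<times> {1,2,3})"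
  proof
    fix xs assume "xs \<in> pp_choices (m+3)"
    then have x: "length xs = Suc m" "set xs \<subseteq> {1,2,3}" unfolding pp_choices_def by auto
    then have ne: "xs \<noteq> []" by auto
    then have xe: "xs = butlast xs @ [last xs]" by simp
    have "set (butlast xs) \<subseteq> {1,2,3}" using x(2) by (meson in_set_butlastD subset_iff)
    moreover have "last xs \<in> {1,2,3}"
    proof -
      have "last xs \<in> set xs" using ne by simp
      then show ?thesis using x(2) by blast
    qed
    moreover have "length (butlast xs) = m" using x(1) by simp
    ultimately have "(butlast xs, last xs) \<in> pp_choices (m+2) \<times> {1,2,3}" unfolding choices_m2 by simp
    then show "xs \<in> (\<lambda>(ds,d). ds @ [d]) ` (pp_choices (m+2) \<times> {1,2,3})" using xe by force
  qed
next
  show "(\<lambda>(ds,d). ds @ [d]) ` (pp_choices (m+2) \<times> {1,2,3}) \<subseteq> pp_choices (m+3)"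
    unfolding choices_m2 pp_choices_def by auto
qed

lemma snoc_inj: "inj_on (\<lambda>(ds,d). ds @ [d]) A"
  by (rule inj_onI) auto

lemma sum_choices_Suc:
  "(\<Sum>xs\<in>pp_choices (m+3). f xs) = (\<Sum>ds\<in>pp_choices (m+2). \<Sum>d\<in>{1,2,3}. f (ds @ [d]))"
proof -
  have "(\<Sum>xs\<in>pp_choices (m+3). f xs) = (\<Sum>p\<in>pp_choices (m+2) \<times> {1,2,3}. f ((\<lambda>(ds,d). ds @ [d]) p))"
    unfolding choices_Suc by (rule sum.reindex[OF snoc_inj, unfolded comp_def])
  also have "\<dots> = (\<Sum>(ds,d)\<in>pp_choices (m+2) \<times> {1,2,3}. f (ds @ [d]))"
    by (rule sum.cong) auto
  also have "\<dots> = (\<Sum>ds\<in>pp_choices (m+2). \<Sum>d\<in>{1,2,3}. f (ds @ [d]))"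
    by (rule sum.cartesian_product[symmetric])
  finally show ?thesis .
qed

lemma card_choices: "card (pp_choices (m+2)) = 3 ^ m"
proof (induction m)
  case 0
  have c0: "pp_choices (0+2) = {[]}" unfolding pp_choices_def by auto
  show ?case by (simp only: c0) simp
next
  case (Suc m)
  have eq: "Suc m + 2 = m + 3" by simp
  have "card (pp_choices (Suc m + 2)) = card (pp_choices (m+2) \<times> {1,2,3::nat})"
    unfolding eq choices_Suc by (rule card_image[OF snoc_inj])
  also have "\<dots> = 3 ^ m * 3" using Suc choices_fin by (simp add: card_cartesian_product)
  finally show ?case by simp
qed

definition SA :: "nat \<Rightarrow> real" where "SA m = (\<Sum>ds\<in>pp_choices (m+2). AA (m+2) ds)"
definition ST :: "nat \<Rightarrow> real" where "ST m = (\<Sum>ds\<in>pp_choices (m+2). \<Sum>d\<in>{1,2,3}. BB (m+2) ds d)"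

lemma card_choices': "card (pp_choices (Suc (Suc m))) = 3 ^ m"
  using card_choices[of m] by simp

lemma mem_choices: "ds \<in> pp_choices (m+2) \<Longrightarrow> length ds = m \<and> set ds \<subseteq> {1,2,3}"
  unfolding choices_m2 by simp

lemma sum3a: "(\<Sum>d\<in>{1,2,3::nat}. (X::real) + 36 + 21 * g d) = 3*X + 108 + 21 * (\<Sum>d\<in>{1,2,3}. g d)"
  by simp

lemma sum3b: "(\<Sum>d\<in>{1,2,3::nat}. (63::real) + 41 * g d) = 189 + 41 * (\<Sum>d\<in>{1,2,3}. g d)"
  by simp

lemma sum_lin: "finite A \<Longrightarrow> (\<Sum>x\<in>A. (a::real) * f x + b + c * g x) = a * sum f A + b * card A + c * sum g A"
  by (simp add: sum.distrib sum_distrib_left)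

lemma sum_lin2: "finite A \<Longrightarrow> (\<Sum>x\<in>A. (b::real) + c * g x) = b * card A + c * sum g A"
  by (simp add: sum.distrib sum_distrib_left)

lemma SA_Suc: "SA (Suc m) = 3 * SA m + 108 * 3 ^ m + 21 * ST m"
proof -
  have "SA (Suc m) = (\<Sum>ds\<in>pp_choices (m+2). \<Sum>d\<in>{1,2,3}. AA (m+3) (ds @ [d]))"
  proof -
    have eq: "Suc m + 2 = m + 3" by simp
    show ?thesis unfolding SA_def eq by (rule sum_choices_Suc)
  qed
  also have "\<dots> = (\<Sum>ds\<in>pp_choices (m+2). \<Sum>d\<in>{1,2,3}. AA (m+2) ds + 36 + 21 * BB (m+2) ds d)"
  proof (rule sum.cong[OF refl], rule sum.cong[OF refl])
    fix ds d assume a: "ds \<in> pp_choices (m+2)" "d \<in> {1,2,3::nat}"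
    have mc: "length ds = m" "set ds \<subseteq> {1,2,3}" using mem_choices[OF a(1)] by auto
    show "AA (m+3) (ds @ [d]) = AA (m+2) ds + 36 + 21 * BB (m+2) ds d"
      by (rule step_lemmas(1)[OF mc a(2)])
  qed
  also have "\<dots> = (\<Sum>ds\<in>pp_choices (m+2). 3 * AA (m+2) ds + 108 + 21 * (\<Sum>d\<in>{1,2,3}. BB (m+2) ds d))"
    by (rule sum.cong[OF refl]) (rule sum3a)
  also have "\<dots> = 3 * SA m + 108 * 3 ^ m + 21 * ST m"
    unfolding SA_def ST_def sum_lin[OF choices_fin] card_choices by simp
  finally show ?thesis .
qed

lemma ST_Suc: "ST (Suc m) = 189 * 3 ^ m + 41 * ST m"
proof -
  have "ST (Suc m) = (\<Sum>ds\<in>pp_choices (m+2). \<Sum>d\<in>{1,2,3}. \<Sum>v\<in>{1,2,3}. BB (m+3) (ds @ [d]) v)"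
  proof -
    have eq: "Suc m + 2 = m + 3" by simp
    show ?thesis unfolding ST_def eq by (rule sum_choices_Suc)
  qed
  also have "\<dots> = (\<Sum>ds\<in>pp_choices (m+2). \<Sum>d\<in>{1,2,3}. 63 + 41 * BB (m+2) ds d)"
  proof (rule sum.cong[OF refl], rule sum.cong[OF refl])
    fix ds d assume a: "ds \<in> pp_choices (m+2)" "d \<in> {1,2,3::nat}"
    have mc: "length ds = m" "set ds \<subseteq> {1,2,3}" using mem_choices[OF a(1)] by auto
    have "(\<Sum>v\<in>{1,2,3}. BB (m+3) (ds @ [d]) v) = (\<Sum>v\<in>{1,2,3::nat}. 21 + BB (m+2) ds d * ww v)"
      by (rule sum.cong[OF refl]) (rule step_lemmas(2)[OF mc a(2)])
    also have "\<dots> = 63 + 41 * BB (m+2) ds d" by (simp add: ww_def)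
    finally show "(\<Sum>v\<in>{1,2,3}. BB (m+3) (ds @ [d]) v) = 63 + 41 * BB (m+2) ds d" .
  qed
  also have "\<dots> = (\<Sum>ds\<in>pp_choices (m+2). 189 + 41 * (\<Sum>d\<in>{1,2,3}. BB (m+2) ds d))"
    by (rule sum.cong[OF refl]) (rule sum3b)
  also have "\<dots> = 189 * 3 ^ m + 41 * ST m"
    unfolding ST_def sum_lin2[OF choices_fin] card_choices by simp
  finally show ?thesis .
qed

lemma SA0: "SA 0 = 513" and ST0: "ST 0 = 924"
proof -
  have c: "pp_choices 2 = {[]}" unfolding pp_choices_def by auto
  have z: "0 + 2 = (2::nat)" by simp
  show "SA 0 = 513" unfolding SA_def z c using base_lemmas(1) by simp
  have "ST 0 = (\<Sum>d\<in>{1,2,3::nat}. BB 2 [] d)"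
    unfolding ST_def z c by simp
  also have "\<dots> = (\<Sum>d\<in>{1,2,3::nat}. 21 + 21 * ww d)"
    by (rule sum.cong[OF refl]) (rule base_lemmas(2))
  finally have "ST 0 = (\<Sum>d\<in>{1,2,3::nat}. 21 + 21 * ww d)" .
  then show "ST 0 = 924" by (simp add: ww_def)
qed

definition fa :: "nat \<Rightarrow> real" where
  "fa n = 3969 / 1444 * (41 / 3) ^ n + 45 / 38 * real n - 3969 / 1444"
definition ft :: "nat \<Rightarrow> real" where
  "ft n = 63 / 38 * ((41 / 3) ^ n - 1)"

lemma closed: "SA m = 3 ^ m * fa (m+2) \<and> ST m = 3 ^ (m+1) * ft (m+2)"
proof (induction m)
  case 0
  show ?case using SA0 ST0 unfolding fa_def ft_def by (simp add: power2_eq_square)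
next
  case (Suc m)
  then have IH: "SA m = 3 ^ m * fa (m+2)" "ST m = 3 ^ (m+1) * ft (m+2)" by auto
  define x :: real where "x = (41/3) ^ (m+2)"
  have fa1: "fa (Suc m + 2) = 3969 / 1444 * (x * (41/3)) + 45 / 38 * (real m + 3) - 3969 / 1444"
    unfolding fa_def x_def by (simp add: power_Suc2 add.commute[of 1])
  have fa0: "fa (m+2) = 3969 / 1444 * x + 45 / 38 * (real m + 2) - 3969 / 1444"
    unfolding fa_def x_def by simp
  have ft1: "ft (Suc m + 2) = 63 / 38 * (x * (41/3) - 1)"
    unfolding ft_def x_def by (simp add: power_Suc2)
  have ft0: "ft (m+2) = 63 / 38 * (x - 1)" unfolding ft_def x_def by simp
  have k1: "3 * fa (m+2) + 108 + 63 * ft (m+2) = 3 * fa (Suc m + 2)"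
    unfolding fa1 fa0 ft0 by (simp add: field_simps)
  have k2: "189 + 41 * (3 * ft (m+2)) = 9 * ft (Suc m + 2)"
    unfolding ft1 ft0 by (simp add: field_simps)
  have "SA (Suc m) = 3 ^ m * (3 * fa (m+2) + 108 + 63 * ft (m+2))"
    unfolding SA_Suc IH by (simp add: algebra_simps)
  also have "\<dots> = 3 ^ Suc m * fa (Suc m + 2)" unfolding k1 by simp
  finally have "SA (Suc m) = 3 ^ Suc m * fa (Suc m + 2)" .
  moreover have "ST (Suc m) = 3 ^ m * (189 + 41 * (3 * ft (m+2)))"
    unfolding ST_Suc IH by (simp add: algebra_simps)
  moreover have "3 ^ m * (189 + 41 * (3 * ft (m+2))) = 3 ^ (Suc m + 1) * ft (Suc m + 2)"
    unfolding k2 by simp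
  ultimately show ?case by simp
qed

theorem theorem7:
  fixes n :: nat
  assumes "n \<ge> 1"
  shows "STN_avr n = 3969 / 1444 * (41 / 3) ^ n + 45 / 38 * real n - 3969 / 1444"
proof (cases "n = 1")
  case True
  have c: "pp_choices 1 = {[]}" unfolding pp_choices_def by auto
  have "STN (pp_verts 1) (pp_edges 1 []) = 36" unfolding pp1 STN_cnt by (rule hex_all)
  then show ?thesis unfolding STN_avr_def True c AA_def by simp
next
  case False
  define m where "m = n - 2"
  have m: "n = m + 2" unfolding m_def using assms False by simp
  have "STN_avr n = SA m / 3 ^ m"
    unfolding STN_avr_def SA_def AA_def m card_choices by simp
  also have "\<dots> = fa (m+2)" using closed[of m] by simp
  finally show ?thesis unfolding fa_def m by simp
qed


end
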